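(* Let $C\subseteq\mathbb{F}_q^{2n}$ be a symplectic self-orthogonal $\mathbb F_q$-linear code of dimension $n-k$ (so that $Q(C)$ is an $[[n,k]]_q$ stabilizer code), and let $\emptyset\neq I\subsetneq J\subseteq\{1,\dots,n\}$. Assume $\mathrm{swt}(C)\geq|I|+1$. If \[n+k-2|J|+2|I|>0\quad\text{and}\quad \mathrm{gsw}_{\,n+k-2|J|+2|I|}\left(C^{\perp_s}\right)\geq n-|J|+1,\] then $\sigma_I\left[\pi_J\left(C^{\perp_s}\right)\right]\neq\sigma_I(C)$.
   Context: Vectors of $\mathbb{F}_q^{2n}$ are written $(\mathbf a|\mathbf b)$, coordinate pair $(a_j,b_j)$ indexed by $j\in\{1,\dots,n\}$. Symplectic form $(\mathbf a|\mathbf b)\cdot_s(\mathbf c|\mathbf d)=\mathbf a\cdot\mathbf d-\mathbf b\cdot\mathbf c$; $C^{\perp_s}$ its dual; $C$ symplectic self-orthogonal if $C\subseteq C^{\perp_s}$. Symplectic weight of $(\mathbf a|\mathbf b)$: $\#\{j:(a_j,b_j)\ne(0,0)\}$; $\mathrm{swt}(D)$ is the minimum symplectic weight of a nonzero vector of $D$. For $R\subseteq\{1,\dots,n\}$: $\pi_R(\mathbf a|\mathbf b)=(a_j|b_j)_{j\in R}$, puncturing $\pi_R(D)=\{\pi_R(\mathbf y):\mathbf y\in D\}$, shortening $\sigma_R(D)=\{\pi_R(\mathbf y):\mathbf y=(\mathbf a|\mathbf b)\in D,\ \mathrm{supp}(\mathbf a)\cup\mathrm{supp}(\mathbf b)\subseteq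 R\}$; the shortening at $I$ of a code with coordinate pairs indexed by $J\supseteq I$ is defined the same way. For an $\mathbb F_q$-linear $D\subseteq\mathbb F_q^{2n}$ and $1\le t\le\dim D$, the $t$-th generalized symplectic weight is $\mathrm{gsw}_t(D)=\min\{|R|:R\subseteq\{1,\dots,n\},\ \dim\sigma_R(D)\ge t\}$. *)

theory Defs
  imports Complex_Main "HOL-Library.Function_Algebras" "HOL-Library.Product_Plus"
begin

text \<open>A vector (a|b) of F_q^{2n}, written as a pair of coordinate functions.
  Vectors whose coordinate pairs are indexed by a finite set R are represented
  by functions vanishing outside R.\<close>

type_synonym 'a svec = "(nat \<Rightarrow> 'a) \<times> (nat \<Rightarrow> 'a)"

definition sscale :: "'a::field \<Rightarrow> 'a svec \<Rightarrow> 'a svec" where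
  "sscale c v = ((\<lambda>j. c * fst v j), (\<lambda>j. c * snd v j))"

definition ssupp :: "'a::field svec \<Rightarrow> nat set" where
  "ssupp v = {j. fst v j \<noteq> 0 \<or> snd v j \<noteq> 0}"

definition sspace :: "nat set \<Rightarrow> 'a::field svec set" where
  "sspace R = {v. ssupp v \<subseteq> R}"

definition linear_code :: "nat set \<Rightarrow> 'a::field svec set \<Rightarrow> bool" where
  "linear_code R D \<longleftrightarrow> D \<subseteq> sspace R \<and> module.subspace sscale D"

definition cdim :: "'a::field svec set \<Rightarrow> nat" where
  "cdim D = vector_space.dim sscale D"

definition sform :: "nat \<Rightarrow> 'a::field svec \<Rightarrow> 'a svec \<Rightarrow> 'a" where
  "sform n x y = (\<Sum>j\<in>{1..n}. fst x j * snd y j - snd x j * fst y j)"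

definition sdual :: "nat \<Rightarrow> 'a::field svec set \<Rightarrow> 'a svec set" where
  "sdual n C = {y \<in> sspace {1..n}. \<forall>x\<in>C. sform n x y = 0}"

definition swt :: "'a::field svec \<Rightarrow> nat" where
  "swt v = card (ssupp v)"

definition proj :: "nat set \<Rightarrow> 'a::field svec \<Rightarrow> 'a svec" where
  "proj R v = ((\<lambda>j. if j \<in> R then fst v j else 0), (\<lambda>j. if j \<in> R then snd v j else 0))"

definition puncture :: "nat set \<Rightarrow> 'a::field svec set \<Rightarrow> 'a svec set" where
  "puncture R D = proj R ` D"

definition shorten :: "nat set \<Rightarrow> 'a::field svec set \<Rightarrow> 'a svec set" where
  "shorten R D = proj R ` {y \<in> D. ssupp y \<subseteq> R}"

definition gsw :: "nat \<Rightarrow> nat \<Rightarrow> 'a::field svec set \<Rightarrow> nat" where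
  "gsw n t D = Min {card R | R. R \<subseteq> {1..n} \<and> cdim (shorten R D) \<ge> t}"

end

theory Submission
  imports Defs "HOL-Library.FuncSet"
begin

lemma sscale_simps[simp]: "fst (sscale c v) = (\<lambda>j. c * fst v j)" "snd (sscale c v) = (\<lambda>j. c * snd v j)"
  by (simp_all add: sscale_def)

interpretation sv: vector_space "sscale :: 'a::field \<Rightarrow> 'a svec \<Rightarrow> 'a svec"
  by unfold_locales (auto simp: sscale_def algebra_simps prod_eq_iff fun_eq_iff)

lemma sspace_out: "v \<in> sspace R \<Longrightarrow> j \<notin> R \<Longrightarrow> fst v j = 0 \<and> snd v j = 0"
  by (auto simp: sspace_def ssupp_def)

lemma finite_sspace: "finite R \<Longrightarrow> finite (sspace R :: 'a::{field,finite} svec set)"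
proof -
  assume R: "finite R"
  let ?h = "\<lambda>v::'a svec. (restrict (fst v) R, restrict (snd v) R)"
  have "inj_on ?h (sspace R)"
  proof (rule inj_onI)
    fix x y assume x: "x \<in> sspace R" and y: "y \<in> sspace R" and e: "?h x = ?h y"
    show "x = y"
    proof (rule prod_eqI; rule ext)
      fix j show "fst x j = fst y j"
        using x y e sspace_out[OF x, of j] sspace_out[OF y, of j]
        by (cases "j \<in> R") (auto simp: restrict_def fun_eq_iff dest!: spec[of _ j])
      show "snd x j = snd y j"
        using x y e sspace_out[OF x, of j] sspace_out[OF y, of j]
        by (cases "j \<in> R") (auto simp: restrict_def fun_eq_iff dest!: spec[of _ j])
    qed
  qed
  moreover have "?h ` sspace R \<subseteq> (R \<rightarrow>\<^sub>E UNIV) \<times> (R \<rightarrow>\<^sub>E UNIV)" by auto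
  moreover have "finite ((R \<rightarrow>\<^sub>E (UNIV::'a set)) \<times> (R \<rightarrow>\<^sub>E (UNIV::'a set)))"
    using R by (intro finite_cartesian_product finite_PiE) auto
  ultimately have "finite (?h ` sspace R)" "inj_on ?h (sspace R)" using finite_subset by blast+
  then show ?thesis by (rule finite_imageD)
qed

definition lfun :: "('a::field svec \<Rightarrow> 'a) \<Rightarrow> bool" where
  "lfun f \<longleftrightarrow> (\<forall>x y. f (x + y) = f x + f y) \<and> (\<forall>c x. f (sscale c x) = c * f x)"

lemma dim_le_subset:
  fixes A B :: "'a::field svec set"
  assumes "A \<subseteq> B" "finite B"
  shows "sv.dim A \<le> sv.dim B"
proof -
  obtain X where X: "X \<subseteq> B" "sv.independent X" "B \<subseteq> sv.span X" "card X = sv.dim B"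
    using sv.basis_exists by blast
  have "finite X" using X(1) assms(2) finite_subset by blast
  then show ?thesis using sv.dim_le_card[of A X] X assms(1) by auto
qed

lemma one_functional:
  fixes W :: "'a::field svec set"
  assumes W: "sv.subspace W" "finite W" and f: "lfun f"
  shows "sv.dim W \<le> sv.dim {w\<in>W. f w = 0} + 1"
proof (cases "\<forall>w\<in>W. f w = 0")
  case True
  then have "{w\<in>W. f w = 0} = W" by auto
  then show ?thesis by simp
next
  case False
  then obtain w0 where w0: "w0 \<in> W" "f w0 \<noteq> 0" by auto
  let ?W0 = "{w\<in>W. f w = 0}"
  obtain X where X: "X \<subseteq> ?W0" "sv.independent X" "?W0 \<subseteq> sv.span X" "card X = sv.dim ?W0"
    using sv.basis_exists by blast
  have fX: "finite X" using X(1) W(2) finite_subset by (metis (no_types, lifting) mem_Collect_eq subsetI subset_iff)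
  have "W \<subseteq> sv.span (insert w0 X)"
  proof
    fix w assume w: "w \<in> W"
    define c where "c = f w / f w0"
    have f0: "f (sscale (- c) w0) = - c * f w0" using f unfolding lfun_def by blast
    have "f (w + sscale (- c) w0) = f w + f (sscale (- c) w0)" using f unfolding lfun_def by blast
    also have "\<dots> = 0" using f0 w0(2) by (simp add: c_def)
    finally have "f (w + sscale (- c) w0) = 0" .
    moreover have "w + sscale (- c) w0 \<in> W"
      using W(1) w w0(1) by (metis sv.subspace_diff sv.subspace_scale sv.scale_minus_left diff_conv_add_uminus)
    ultimately have "w + sscale (- c) w0 \<in> sv.span X" using X(3) by auto
    then have "w - sscale c w0 \<in> sv.span X"
      by (metis diff_conv_add_uminus sv.scale_minus_left)
    then show "w \<in> sv.span (insert w0 X)" using sv.span_insert by blast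
  qed
  then have "sv.dim W \<le> card (insert w0 X)" using sv.dim_le_card fX by blast
  also have "\<dots> \<le> card X + 1" by (simp add: card_insert_if fX)
  finally show ?thesis using X(4) by simp
qed

lemma lfun_0: "lfun f \<Longrightarrow> f 0 = 0"
  unfolding lfun_def by (metis add_cancel_right_right add_0)

lemma subspace_ker:
  assumes W: "sv.subspace W" and F: "\<forall>f\<in>F. lfun f"
  shows "sv.subspace {w\<in>W. \<forall>f\<in>F. f w = 0}"
  unfolding sv.subspace_def
proof (intro conjI ballI allI)
  show "0 \<in> {w \<in> W. \<forall>f\<in>F. f w = 0}" using W F lfun_0 by (auto simp: sv.subspace_0)
next
  fix x y assume "x \<in> {w \<in> W. \<forall>f\<in>F. f w = 0}" "y \<in> {w \<in> W. \<forall>f\<in>F. f w = 0}"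
  then have x: "x \<in> W" "\<forall>f\<in>F. f x = 0" and y: "y \<in> W" "\<forall>f\<in>F. f y = 0" by auto
  have "\<forall>f\<in>F. f (x + y) = 0"
  proof
    fix f assume f: "f \<in> F"
    then have "f (x + y) = f x + f y" using F unfolding lfun_def by blast
    moreover have "f x = 0" "f y = 0" using x y f by blast+
    ultimately show "f (x + y) = 0" by simp
  qed
  then show "x + y \<in> {w \<in> W. \<forall>f\<in>F. f w = 0}" using W x y
    by (simp add: sv.subspace_add)
next
  fix c x assume "x \<in> {w \<in> W. \<forall>f\<in>F. f w = 0}"
  moreover have "\<forall>f\<in>F. f (sscale c x) = c * f x" using F unfolding lfun_def by blast
  ultimately show "sscale c x \<in> {w \<in> W. \<forall>f\<in>F. f w = 0}" using W
    by (auto simp: sv.subspace_scale simp del: sscale_simps)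
qed

lemma many_functionals:
  fixes W :: "'a::field svec set"
  assumes F: "finite F" "\<forall>f\<in>F. lfun f" and W: "sv.subspace W" "finite W"
  shows "sv.dim W \<le> sv.dim {w\<in>W. \<forall>f\<in>F. f w = 0} + card F"
  using F
proof (induction F rule: finite_induct)
  case empty then show ?case by simp
next
  case (insert f F)
  let ?WF = "{w\<in>W. \<forall>f\<in>F. f w = 0}"
  have "sv.subspace ?WF" using subspace_ker[OF W(1)] insert by auto
  moreover have "finite ?WF" using W(2) by auto
  ultimately have h: "sv.dim ?WF \<le> sv.dim {w\<in>?WF. f w = 0} + 1"
    using one_functional insert by blast
  have eq: "{w\<in>?WF. f w = 0} = {w\<in>W. \<forall>g\<in>insert f F. g w = 0}" by auto
  have "card (insert f F) = card F + 1" using insert by simp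
  moreover have "sv.dim W \<le> sv.dim ?WF + card F" using insert.IH insert.prems by auto
  ultimately show ?case using h[unfolded eq] by linarith
qed

definition delta :: "nat \<Rightarrow> nat \<Rightarrow> 'a::field" where
  "delta j = (\<lambda>i. if i = j then 1 else 0)"

lemma delta_nz[simp]: "(delta j :: nat \<Rightarrow> 'a::field) \<noteq> 0"
proof
  assume "delta j = (0 :: nat \<Rightarrow> 'a)"
  then have "delta j j = (0::'a)" by simp
  then show False by (simp add: delta_def)
qed

lemma dim_sspace:
  "2 * n \<le> sv.dim (sspace {1..n} :: 'a::{field,finite} svec set)"
proof -
  define E1 where "E1 = (\<lambda>j. (delta j :: nat\<Rightarrow>'a, 0::nat\<Rightarrow>'a)) ` {1..n}"
  define E2 where "E2 = (\<lambda>j. (0::nat\<Rightarrow>'a, delta j :: nat\<Rightarrow>'a)) ` {1..n}"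
  have c1: "card E1 = n" unfolding E1_def
    by (subst card_image) (auto simp: inj_on_def delta_def fun_eq_iff split: if_splits)
  have c2: "card E2 = n" unfolding E2_def
    by (subst card_image) (auto simp: inj_on_def delta_def fun_eq_iff split: if_splits)
  have disj: "E1 \<inter> E2 = {}" by (auto simp: E1_def E2_def)
  have cE: "card (E1 \<union> E2) = 2 * n"
    using c1 c2 disj card_Un_disjoint[of E1 E2] by (simp add: E1_def E2_def)
  have sub: "E1 \<union> E2 \<subseteq> sspace {1..n}"
    by (auto simp: E1_def E2_def sspace_def ssupp_def delta_def split: if_splits)
  have ind: "sv.independent (E1 \<union> E2)"
  proof
    assume "sv.dependent (E1 \<union> E2)"
    then obtain a where a: "a \<in> E1 \<union> E2" "a \<in> sv.span (E1 \<union> E2 - {a})"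
      unfolding sv.dependent_def by blast
    show False
    proof (cases "a \<in> E1")
      case True
      then obtain j where j: "a = (delta j, 0)" "j \<in> {1..n}" by (auto simp: E1_def)
      have "sv.subspace {v::'a svec. fst v j = 0}" by (auto simp: sv.subspace_def)
      moreover have "E1 \<union> E2 - {a} \<subseteq> {v. fst v j = 0}"
        using j by (auto simp: E1_def E2_def delta_def split: if_splits)
      ultimately have "sv.span (E1 \<union> E2 - {a}) \<subseteq> {v. fst v j = 0}"
        using sv.span_minimal by blast
      then show False using a j by (auto simp: delta_def)
    next
      case False
      then obtain j where j: "a = (0, delta j)" "j \<in> {1..n}" using a by (auto simp: E2_def)
      have "sv.subspace {v::'a svec. snd v j = 0}" by (auto simp: sv.subspace_def)
      moreover have "E1 \<union> E2 - {a} \<subseteq> {v. snd v j = 0}"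
        using j by (auto simp: E1_def E2_def delta_def split: if_splits)
      ultimately have "sv.span (E1 \<union> E2 - {a}) \<subseteq> {v. snd v j = 0}"
        using sv.span_minimal by blast
      then show False using a j by (auto simp: delta_def)
    qed
  qed
  have "sv.dim (E1 \<union> E2) = 2 * n" using sv.dim_eq_card_independent[OF ind] cE by simp
  moreover have "sv.dim (E1 \<union> E2) \<le> sv.dim (sspace {1..n} :: 'a svec set)"
    using dim_le_subset[OF sub] finite_sspace by blast
  ultimately show ?thesis by simp
qed

lemma fst_sadd[simp]: "fst (x + y) j = fst x j + fst (y::'a::field svec) j"
  by (simp add: plus_fun_def)
lemma snd_sadd[simp]: "snd (x + y) j = snd x j + snd (y::'a::field svec) j"
  by (simp add: plus_fun_def)

lemma lfun_sform: "lfun (\<lambda>y. sform n b y)"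
  unfolding lfun_def sform_def
  by (auto simp: algebra_simps sum.distrib sum_distrib_left sum_subtractf)

lemma sform_left_subspace: "sv.subspace {x. sform n x y = (0::'a::field)}"
  unfolding sv.subspace_def sform_def
  by (auto simp: algebra_simps sum.distrib sum_distrib_left[symmetric] sum_subtractf)

lemma lfun_fst: "lfun (\<lambda>y. fst y j)"
  unfolding lfun_def by simp
lemma lfun_snd: "lfun (\<lambda>y. snd y j)"
  unfolding lfun_def by simp

lemma subspace_sspace: "sv.subspace (sspace R :: 'a::field svec set)"
proof -
  have "x + y \<in> sspace R" if "x \<in> sspace R" "y \<in> sspace R" for x y :: "'a svec"
    using sspace_out[OF that(1)] sspace_out[OF that(2)] unfolding sspace_def ssupp_def
    by (auto; metis add.right_neutral)
  then show ?thesis unfolding sv.subspace_def by (auto simp: sspace_def ssupp_def)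
qed

lemma proj_id: "ssupp y \<subseteq> R \<Longrightarrow> proj R y = y"
  unfolding proj_def ssupp_def by (auto simp: prod_eq_iff fun_eq_iff)

theorem proposition21:
  fixes C :: "'a::{field,finite} svec set"
    and n k :: nat and I J :: "nat set"
  assumes "linear_code {1..n} C"
    and "C \<subseteq> sdual n C"
    and "k \<le> n"
    and "cdim C = n - k"
    and "I \<noteq> {}" and "I \<subset> J" and "J \<subseteq> {1..n}"
    and "\<forall>x\<in>C. x \<noteq> 0 \<longrightarrow> swt x \<ge> card I + 1"
    and "int n + int k - 2 * int (card J) + 2 * int (card I) > 0"
    and "gsw n (nat (int n + int k - 2 * int (card J) + 2 * int (card I))) (sdual n C)
           \<ge> n - card J + 1"
  shows "shorten I (puncture J (sdual n C)) \<noteq> shorten I C"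
proof -
  note lc = assms(1) and dimC = assms(4) and IJ = assms(6) and Jn = assms(7)
    and swtC = assms(8) and tpos = assms(9) and gswA = assms(10)
  define t where "t = nat (int n + int k - 2 * int (card J) + 2 * int (card I))"
  define D where "D = sdual n C"
  define V where "V = (sspace {1..n} :: 'a svec set)"
  have finV: "finite V" unfolding V_def by (rule finite_sspace) simp
  have DV: "D \<subseteq> V" unfolding D_def V_def sdual_def by auto
  have CV: "C \<subseteq> V" using lc unfolding linear_code_def V_def by auto
  have finJ: "finite J" using finite_subset[OF Jn] by simp
  have finI: "finite I" using finite_subset[of I J] IJ finJ by blast
  have cJI: "card (J - I) = card J - card I" using IJ finI by (simp add: card_Diff_subset)
  have cIJ: "card I < card J" using IJ finJ psubset_card_mono by blast
  have cJn: "card J \<le> n" using Jn card_mono[of "{1..n}" J] by simp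
  obtain B where B: "B \<subseteq> C" "sv.independent B" "C \<subseteq> sv.span B" "card B = sv.dim C"
    using sv.basis_exists by blast
  have cB: "card B = n - k" using B(4) dimC by (simp add: cdim_def)
  define F1 where "F1 = (\<lambda>b y. sform n b y) ` B"
  define F2 where "F2 = (\<lambda>j (y::'a svec). fst y j) ` (J - I)"
  define F3 where "F3 = (\<lambda>j (y::'a svec). snd y j) ` (J - I)"
  define F where "F = F1 \<union> F2 \<union> F3"
  have finB: "finite B" using finite_subset[OF subset_trans[OF B(1) CV] finV] .
  have finF: "finite F" unfolding F_def F1_def F2_def F3_def using finB finJ by simp
  have lF: "\<forall>f\<in>F. lfun f" unfolding F_def F1_def F2_def F3_def using lfun_sform lfun_fst lfun_snd by auto
  have cF: "card F \<le> (n - k) + 2 * (card J - card I)"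
  proof -
    have "card F \<le> card F1 + card F2 + card F3"
      unfolding F_def using card_Un_le[of "F1 \<union> F2" F3] card_Un_le[of F1 F2] by linarith
    moreover have "card F1 \<le> card B" unfolding F1_def by (rule card_image_le[OF finB])
    moreover have "card F2 \<le> card (J - I)" unfolding F2_def using finJ by (intro card_image_le) simp
    moreover have "card F3 \<le> card (J - I)" unfolding F3_def using finJ by (intro card_image_le) simp
    ultimately show ?thesis using cB cJI by linarith
  qed
  define D' where "D' = {w\<in>V. \<forall>f\<in>F. f w = 0}"
  have "sv.dim V \<le> sv.dim D' + card F"
    unfolding D'_def using many_functionals[OF finF lF] subspace_sspace finV V_def by blast
  moreover have "2 * n \<le> sv.dim V" unfolding V_def by (rule dim_sspace)
  ultimately have dimD': "t \<le> sv.dim D'" using cF tpos cIJ cJn assms(3) unfolding t_def by linarith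
  have D'D: "D' \<subseteq> D"
  proof
    fix w assume w: "w \<in> D'"
    have "B \<subseteq> {x. sform n x w = 0}" using w unfolding D'_def F_def F1_def by auto
    then have "sv.span B \<subseteq> {x. sform n x w = 0}" using sv.span_minimal sform_left_subspace by blast
    then show "w \<in> D" using B(3) w unfolding D'_def D_def sdual_def V_def by auto
  qed
  have D'z: "fst w j = 0 \<and> snd w j = 0" if "w \<in> D'" "j \<in> J - I" for w j
    using that unfolding D'_def F_def F2_def F3_def by auto
  define R where "R = {1..n} - J"
  define K where "K = shorten R D"
  have cR: "card R = n - card J" unfolding R_def using Jn by (simp add: card_Diff_subset finJ)
  have dimK: "cdim K < t"
  proof (rule ccontr)
    assume "\<not> cdim K < t"
    then have "card R \<in> {card R | R. R \<subseteq> {1..n} \<and> cdim (shorten R D) \<ge> t}"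
      unfolding K_def R_def by auto
    moreover have "finite {card R | R. R \<subseteq> {1..n} \<and> cdim (shorten R D) \<ge> t}"
    proof -
      have "{card R | R. R \<subseteq> {1..n} \<and> cdim (shorten R D) \<ge> t} \<subseteq> card ` Pow {1..n}" by auto
      then show ?thesis using finite_subset[of _ "card ` Pow {1..n}"] by simp
    qed
    ultimately have "gsw n t D \<le> card R" unfolding gsw_def by (meson Min_le)
    then show False using gswA cR unfolding t_def D_def by simp
  qed
  have "finite {y \<in> D. ssupp y \<subseteq> R}" using finite_subset[OF DV finV] by simp
  then have finK: "finite K" unfolding K_def shorten_def by simp
  have "\<not> D' \<subseteq> K"
  proof
    assume "D' \<subseteq> K"
    then have "sv.dim D' \<le> sv.dim K" using dim_le_subset finK by blast
    then show False using dimK dimD' unfolding cdim_def by simp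
  qed
  then obtain y where y: "y \<in> D'" "y \<notin> K" by blast
  have yD: "y \<in> D" using y D'D by blast
  have yV: "y \<in> V" using yD DV by blast
  have "\<exists>j\<in>I. fst y j \<noteq> 0 \<or> snd y j \<noteq> 0"
  proof (rule ccontr)
    assume nj: "\<not> (\<exists>j\<in>I. fst y j \<noteq> 0 \<or> snd y j \<noteq> 0)"
    have "ssupp y \<subseteq> R"
    proof
      fix i assume i: "i \<in> ssupp y"
      then have "i \<in> {1..n}" using yV unfolding V_def sspace_def by auto
      moreover have "i \<notin> J"
      proof
        assume "i \<in> J"
        then show False using nj D'z[OF y(1), of i] i unfolding ssupp_def by blast
      qed
      ultimately show "i \<in> R" unfolding R_def by simp
    qed
    then have "y \<in> K" unfolding K_def shorten_def using yD proj_id by (metis (mono_tags, lifting) image_eqI mem_Collect_eq)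
    then show False using y(2) by blast
  qed
  then obtain j where j: "j \<in> I" "fst y j \<noteq> 0 \<or> snd y j \<noteq> 0" by blast
  define z where "z = proj I (proj J y)"
  have "proj J y \<in> puncture J D" unfolding puncture_def using yD by blast
  moreover have "ssupp (proj J y) \<subseteq> I"
    using D'z[OF y(1)] unfolding ssupp_def proj_def by auto
  ultimately have zin: "z \<in> shorten I (puncture J D)" unfolding shorten_def z_def by blast
  have "j \<in> J" using j IJ by blast
  then have znz: "z \<noteq> 0" using j unfolding z_def proj_def by (auto simp: prod_eq_iff fun_eq_iff)
  have "shorten I C \<subseteq> {0}"
  proof
    fix w assume "w \<in> shorten I C"
    then obtain x where x: "x \<in> C" "ssupp x \<subseteq> I" "w = proj I x" unfolding shorten_def by blast
    have "swt x \<le> card I" unfolding swt_def using x(2) finI card_mono by blast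
    then have "x = 0" using swtC x(1) by fastforce
    then show "w \<in> {0}" using x(3) unfolding proj_def by (simp add: zero_prod_def zero_fun_def fun_eq_iff)
  qed
  then show ?thesis using zin znz unfolding D_def by blast
qed

end
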